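(* Let $n\ge 2$ and let $\mathbf p^0\in\Delta_n$ be arbitrary. Let $m$ be the number of indices $i$ with $p^0_i=0$ (so $0\le m\le n-1$). Consider the trajectory $\mathbf p^{t+1}=F(\mathbf p^t)$, $t=0,1,\dots$, and $\mathbf r^t$ defined by $r^t_i=(1-p^t_i)/(n-1)$. Then the limits $\mathbf p^\infty=\lim_{t\to\infty}\mathbf p^t$ and $\mathbf r^\infty=\lim_{t\to\infty}\mathbf r^t$ exist, $\mathbf p^\infty$ is a fixed point of $F$, and: 1) if $m=0$, then $\mathbf p^\infty=\mathbf r^\infty$ and $p^\infty_i=r^\infty_i=\frac1n$ for all $i$; 2) if $1\le m<n$, then $\mathbf p^\infty\neq\mathbf r^\infty$; for every $j$ with $p^0_j=0$ one has $p^\infty_j=0$ and $r^\infty_j=\frac{1}{n-1}$, and for every $i$ with $p^0_i>0$ one has $p^\infty_i=\frac{1}{n-m}$ and $r^\infty_i=\frac{n-m-1}{(n-1)(n-m)}$. Moreover, among these limit states only $\mathbf p^\infty=(\frac1n,\dots,\frac1n)$ is stable: it is a locally asymptotically stable fixed point of $F$ on $\Delta_n$, while every limit state with $m\ge1$ is an unstable fixed point of $F$ on $\Delta_n$.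
   Context: Let $n\ge 2$ and $\Delta_n=\{\mathbf p=(p_1,\dots,p_n)\in\mathbb R^n: p_i\ge 0,\ \sum_i p_i=1\}$ (stochastic vectors). For $\mathbf p\in\Delta_n$ put $L(\mathbf p)=\sum_{k=1}^n p_k^2$ and define $F:\Delta_n\to\Delta_n$ by $F(\mathbf p)_i=p_i\,\frac{n-p_i}{n-L(\mathbf p)}$. (This is the map $p_i\mapsto p_i(1+r_i)/(1+\sum_k p_k r_k)$ with $r_i=(1-p_i)/(n-1)$.) Write $L^t=L(\mathbf p^t)$. *)

theory Defs
  imports "HOL-Analysis.Analysis"
begin

text \<open>Vectors in R^n are modelled as real ^ 'n, with n = CARD('n).\<close>

definition Delta :: "(real ^ 'n) set" where
  "Delta = {p. (\<forall>i. p $ i \<ge> 0) \<and> (\<Sum>i\<in>UNIV. p $ i) = 1}"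

definition Lsq :: "real ^ 'n \<Rightarrow> real" where
  "Lsq p = (\<Sum>i\<in>UNIV. (p $ i)^2)"

definition Fmap :: "real ^ 'n \<Rightarrow> real ^ 'n" where
  "Fmap p = (\<chi> i. p $ i * (real CARD('n) - p $ i) / (real CARD('n) - Lsq p))"

definition rvec :: "real ^ 'n \<Rightarrow> real ^ 'n" where
  "rvec p = (\<chi> i. (1 - p $ i) / (real CARD('n) - 1))"

definition stable_on :: "'a::metric_space set \<Rightarrow> ('a \<Rightarrow> 'a) \<Rightarrow> 'a \<Rightarrow> bool" where
  "stable_on S f x \<longleftrightarrow>
     (\<forall>\<epsilon>>0. \<exists>\<delta>>0. \<forall>y\<in>S. dist y x < \<delta> \<longrightarrow> (\<forall>t. dist ((f ^^ t) y) x < \<epsilon>))"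

definition loc_asym_stable_on :: "'a::metric_space set \<Rightarrow> ('a \<Rightarrow> 'a) \<Rightarrow> 'a \<Rightarrow> bool" where
  "loc_asym_stable_on S f x \<longleftrightarrow> stable_on S f x \<and>
     (\<exists>\<delta>>0. \<forall>y\<in>S. dist y x < \<delta> \<longrightarrow> (\<lambda>t. (f ^^ t) y) \<longlonglongrightarrow> x)"

definition unstable_on :: "'a::metric_space set \<Rightarrow> ('a \<Rightarrow> 'a) \<Rightarrow> 'a \<Rightarrow> bool" where
  "unstable_on S f x \<longleftrightarrow> \<not> stable_on S f x"

end

theory Submission
  imports Defs
begin

lemma Delta_le1:
  fixes y :: "real ^ 'n"
  assumes "y \<in> Delta" shows "y $ i \<le> 1"
proof -
  have "y $ i \<le> (\<Sum>j\<in>UNIV. y $ j)"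
    using assms by (intro member_le_sum) (auto simp: Delta_def)
  thus ?thesis using assms by (simp add: Delta_def)
qed

lemma Delta_nonneg: "y \<in> Delta \<Longrightarrow> y $ i \<ge> 0"
  by (simp add: Delta_def)

lemma Lsq_upper:
  fixes y :: "real ^ 'n"
  assumes "y \<in> Delta" "\<And>i. y $ i \<le> y $ a"
  shows "Lsq y \<le> y $ a"
proof -
  have "Lsq y \<le> (\<Sum>i\<in>UNIV. y $ i * y $ a)"
    unfolding Lsq_def power2_eq_square
    by (intro sum_mono mult_left_mono) (use assms in \<open>auto simp: Delta_def\<close>)
  also have "\<dots> = y $ a" using assms by (simp add: Delta_def sum_distrib_right[symmetric])
  finally show ?thesis .
qed

lemma Lsq_lower:
  fixes y :: "real ^ 'n"
  assumes "y \<in> Delta" "\<And>i. y $ i = 0 \<or> y $ b \<le> y $ i"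
  shows "y $ b \<le> Lsq y"
proof -
  have "(\<Sum>i\<in>UNIV. y $ i * y $ b) \<le> Lsq y"
    unfolding Lsq_def power2_eq_square
  proof (intro sum_mono)
    fix i show "y $ i * y $ b \<le> y $ i * y $ i"
      using assms(2)[of i] Delta_nonneg[OF assms(1), of i] by (auto intro: mult_left_mono)
  qed
  moreover have "(\<Sum>i\<in>UNIV. y $ i * y $ b) = y $ b" using assms by (simp add: Delta_def sum_distrib_right[symmetric])
  ultimately show ?thesis by simp
qed

lemma Lsq_le1:
  fixes y :: "real ^ 'n"
  assumes "y \<in> Delta" shows "Lsq y \<le> 1"
proof -
  have "Lsq y \<le> (\<Sum>i\<in>UNIV. y $ i * 1)"
    unfolding Lsq_def power2_eq_square
    by (intro sum_mono mult_left_mono) (use assms Delta_le1 in \<open>auto simp: Delta_def\<close>)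
  thus ?thesis using assms by (simp add: Delta_def)
qed

lemma denom_pos:
  fixes y :: "real ^ 'n"
  assumes "y \<in> Delta" "CARD('n) \<ge> 2"
  shows "real CARD('n) - Lsq y > 0"
proof -
  have "real CARD('n) \<ge> 2" using assms(2) by simp
  thus ?thesis using Lsq_le1[OF assms(1)] by linarith
qed

lemma Fmap_nth: "Fmap y $ i = y $ i * (real CARD('n) - y $ i) / (real CARD('n) - Lsq y)"
  for y :: "real ^ 'n"
  by (simp add: Fmap_def)

lemma Fmap_Delta:
  fixes y :: "real ^ 'n"
  assumes "y \<in> Delta" "CARD('n) \<ge> 2"
  shows "Fmap y \<in> Delta"
proof -
  let ?N = "real CARD('n)"
  have d: "?N - Lsq y > 0" by (rule denom_pos[OF assms])
  have N2: "?N \<ge> 2" using assms(2) by simp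
  have nn: "\<forall>i. Fmap y $ i \<ge> 0"
  proof
    fix i
    have "y $ i \<le> 1" "y $ i \<ge> 0" using assms Delta_le1 Delta_nonneg by auto
    thus "Fmap y $ i \<ge> 0" using d N2 by (simp add: Fmap_nth)
  qed
  have "(\<Sum>i\<in>UNIV. Fmap y $ i) = (\<Sum>i\<in>UNIV. y $ i * ?N - (y $ i)^2) / (?N - Lsq y)"
    by (simp add: Fmap_nth sum_divide_distrib[symmetric] algebra_simps power2_eq_square)
  also have "(\<Sum>i\<in>UNIV. y $ i * ?N - (y $ i)^2) = ?N - Lsq y"
    using assms(1) by (simp add: sum_subtractf Lsq_def Delta_def sum_distrib_right[symmetric])
  finally have "(\<Sum>i\<in>UNIV. Fmap y $ i) = 1" using d by simp
  thus ?thesis using nn by (simp add: Delta_def)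
qed

lemma Fmap_zero_iff:
  fixes y :: "real ^ 'n"
  assumes "y \<in> Delta" "CARD('n) \<ge> 2"
  shows "Fmap y $ i = 0 \<longleftrightarrow> y $ i = 0"
proof -
  have d: "real CARD('n) - Lsq y > 0" by (rule denom_pos[OF assms])
  have "y $ i \<le> 1" using Delta_le1[OF assms(1)] .
  moreover have "real CARD('n) \<ge> 2" using assms(2) by simp
  ultimately have "real CARD('n) - y $ i > 0" by linarith
  thus ?thesis using d by (simp add: Fmap_nth)
qed

lemma Fmap_mono:
  fixes y :: "real ^ 'n"
  assumes "y \<in> Delta" "CARD('n) \<ge> 2" "y $ i \<le> y $ j"
  shows "Fmap y $ i \<le> Fmap y $ j"
proof -
  let ?N = "real CARD('n)"
  have d: "?N - Lsq y > 0" by (rule denom_pos[OF assms(1,2)])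
  have N2: "?N \<ge> 2" using assms(2) by simp
  have h: "y $ i \<le> 1" "y $ j \<le> 1" "y $ i \<ge> 0" using assms Delta_le1 Delta_nonneg by auto
  have "y $ i * (?N - y $ i) \<le> y $ j * (?N - y $ j)"
  proof -
    have "y $ j * (?N - y $ j) - y $ i * (?N - y $ i) = (y $ j - y $ i) * (?N - y $ i - y $ j)"
      by (simp add: algebra_simps)
    also have "\<dots> \<ge> 0" using h N2 assms(3) by (intro mult_nonneg_nonneg) auto
    finally show ?thesis by simp
  qed
  thus ?thesis using d by (simp add: Fmap_nth divide_right_mono)
qed

lemma Fmap_min_grow:
  fixes y :: "real ^ 'n"
  assumes "y \<in> Delta" "CARD('n) \<ge> 2" "\<And>i. y $ i = 0 \<or> y $ b \<le> y $ i"
  shows "y $ b \<le> Fmap y $ b"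
proof -
  let ?N = "real CARD('n)"
  have d: "?N - Lsq y > 0" by (rule denom_pos[OF assms(1,2)])
  have L: "y $ b \<le> Lsq y" by (rule Lsq_lower[OF assms(1,3)])
  have "y $ b * (?N - Lsq y) \<le> y $ b * (?N - y $ b)"
    using L Delta_nonneg[OF assms(1)] by (intro mult_left_mono) auto
  thus ?thesis using d by (simp add: Fmap_nth le_divide_eq)
qed

lemma Fmap_contract:
  fixes y :: "real ^ 'n"
  assumes "y \<in> Delta" "CARD('n) \<ge> 2" "\<And>i. y $ i \<le> y $ a"
    and mu: "0 < mu" "mu \<le> y $ b"
  shows "Fmap y $ a - Fmap y $ b \<le> (1 - mu / real CARD('n)) * (y $ a - y $ b)"
proof -
  let ?N = "real CARD('n)"
  have d: "?N - Lsq y > 0" by (rule denom_pos[OF assms(1,2)])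
  have N2: "?N \<ge> 2" using assms(2) by simp
  have L: "Lsq y \<le> y $ a" by (rule Lsq_upper[OF assms(1,3)])
  have h: "y $ a \<le> 1" "y $ b \<le> 1" "y $ b \<le> y $ a" using assms Delta_le1 by auto
  have e: "Fmap y $ a - Fmap y $ b = (y $ a - y $ b) * (?N - y $ a - y $ b) / (?N - Lsq y)"
    by (simp add: Fmap_nth diff_divide_distrib[symmetric] algebra_simps)
  have k1: "?N - y $ a - y $ b \<le> (1 - mu / ?N) * (?N - y $ a)"
  proof -
    have "mu / ?N * (?N - y $ a) \<le> mu"
      using N2 h mu by (simp add: field_simps)
    thus ?thesis using mu by (simp add: algebra_simps)
  qed
  have k2: "(1 - mu / ?N) * (?N - y $ a) \<le> (1 - mu / ?N) * (?N - Lsq y)"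
  proof (rule mult_left_mono)
    show "?N - y $ a \<le> ?N - Lsq y" using L by simp
    have "mu / ?N \<le> 1" using mu h N2 by (simp add: field_simps)
    thus "0 \<le> 1 - mu / ?N" by simp
  qed
  have "(y $ a - y $ b) * (?N - y $ a - y $ b) \<le> (y $ a - y $ b) * ((1 - mu / ?N) * (?N - Lsq y))"
    using k1 k2 h by (intro mult_left_mono) auto
  hence "(y $ a - y $ b) * (?N - y $ a - y $ b) / (?N - Lsq y) \<le> (1 - mu / ?N) * (y $ a - y $ b)"
    using d by (subst pos_divide_le_eq) (auto simp: mult_ac)
  thus ?thesis using e by simp
qed

lemma traj_inv:
  fixes y :: "real ^ 'n"
  assumes y: "y \<in> Delta" and n2: "CARD('n) \<ge> 2" and a: "\<And>i. y $ i \<le> y $ a"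
    and bpos: "y $ b > 0" and b: "\<And>i. y $ i = 0 \<or> y $ b \<le> y $ i"
  shows "(Fmap ^^ t) y \<in> Delta \<and> (\<forall>i. (Fmap ^^ t) y $ i = 0 \<longleftrightarrow> y $ i = 0) \<and>
    (\<forall>i. (Fmap ^^ t) y $ i \<le> (Fmap ^^ t) y $ a) \<and>
    (\<forall>i. (Fmap ^^ t) y $ i = 0 \<or> (Fmap ^^ t) y $ b \<le> (Fmap ^^ t) y $ i) \<and>
    y $ b \<le> (Fmap ^^ t) y $ b \<and>
    (Fmap ^^ t) y $ a - (Fmap ^^ t) y $ b \<le> (1 - y $ b / real CARD('n)) ^ t * (y $ a - y $ b)"
proof (induction t)
  case 0
  then show ?case using y a b by auto
next
  case (Suc t)
  define z where "z = (Fmap ^^ t) y"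
  have z: "z \<in> Delta" "\<And>i. z $ i = 0 \<longleftrightarrow> y $ i = 0" "\<And>i. z $ i \<le> z $ a"
    "\<And>i. z $ i = 0 \<or> z $ b \<le> z $ i" "y $ b \<le> z $ b"
    "z $ a - z $ b \<le> (1 - y $ b / real CARD('n)) ^ t * (y $ a - y $ b)"
    using Suc.IH unfolding z_def by auto
  have s: "(Fmap ^^ Suc t) y = Fmap z" by (simp add: z_def)
  have 1: "Fmap z \<in> Delta" by (rule Fmap_Delta[OF z(1) n2])
  have 2: "\<forall>i. Fmap z $ i = 0 \<longleftrightarrow> y $ i = 0" using Fmap_zero_iff[OF z(1) n2] z(2) by auto
  have 3: "\<forall>i. Fmap z $ i \<le> Fmap z $ a" using Fmap_mono[OF z(1) n2] z(3) by auto
  have 4: "\<forall>i. Fmap z $ i = 0 \<or> Fmap z $ b \<le> Fmap z $ i"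
    using Fmap_mono[OF z(1) n2] z(4) Fmap_zero_iff[OF z(1) n2] by metis
  have 5: "y $ b \<le> Fmap z $ b" using Fmap_min_grow[OF z(1) n2 z(4)] z(5) by linarith
  have c: "0 \<le> 1 - y $ b / real CARD('n)"
    using Delta_le1[OF y, of b] n2 bpos by (simp add: field_simps)
  have "Fmap z $ a - Fmap z $ b \<le> (1 - y $ b / real CARD('n)) * (z $ a - z $ b)"
    by (rule Fmap_contract[OF z(1) n2 z(3) bpos z(5)])
  also have "\<dots> \<le> (1 - y $ b / real CARD('n)) * ((1 - y $ b / real CARD('n)) ^ t * (y $ a - y $ b))"
    using c z(6) by (rule mult_left_mono[rotated])
  finally have 6: "Fmap z $ a - Fmap z $ b \<le> (1 - y $ b / real CARD('n)) ^ Suc t * (y $ a - y $ b)"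
    by simp
  show ?case unfolding s using 1 2 3 4 5 6 by blast
qed

definition limv :: "real ^ 'n \<Rightarrow> real ^ 'n" where
  "limv y = (\<chi> i. if y $ i = 0 then 0 else 1 / real (card {j. y $ j \<noteq> 0}))"

lemma traj_conv:
  fixes y :: "real ^ 'n"
  assumes y: "y \<in> Delta" and n2: "CARD('n) \<ge> 2"
  shows "(\<lambda>t. (Fmap ^^ t) y) \<longlonglongrightarrow> limv y"
    and "\<And>t. (Fmap ^^ t) y \<in> Delta"
    and "\<And>t i. (Fmap ^^ t) y $ i = 0 \<longleftrightarrow> y $ i = 0"
    and "\<exists>a b. \<forall>t i. y $ i \<noteq> 0 \<longrightarrow>
           \<bar>(Fmap ^^ t) y $ i - 1 / real (card {j. y $ j \<noteq> 0})\<bar> \<le> y $ a - y $ b"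
proof -
  define S where "S = {j. y $ j \<noteq> 0}"
  define k where "k = card S"
  have fS: "finite S" by simp
  have Sne: "S \<noteq> {}"
  proof
    assume "S = {}"
    hence "\<forall>j. y $ j = 0" by (auto simp: S_def)
    thus False using y by (simp add: Delta_def)
  qed
  have kpos: "real k > 0" using Sne fS by (simp add: k_def card_gt_0_iff)
  obtain a where a: "\<And>i. y $ i \<le> y $ a"
  proof -
    let ?M = "Max (range (\<lambda>i. y $ i))"
    have "?M \<in> range (\<lambda>i. y $ i)" by (intro Max_in) auto
    then obtain a where "y $ a = ?M" by (metis rangeE)
    moreover have "\<And>i. y $ i \<le> ?M" by (intro Max_ge) auto
    ultimately show ?thesis using that by metis
  qed
  obtain b where bS: "b \<in> S" and b: "\<And>i. i \<in> S \<Longrightarrow> y $ b \<le> y $ i"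
  proof -
    let ?M = "Min ((\<lambda>i. y $ i) ` S)"
    have "?M \<in> (\<lambda>i. y $ i) ` S" using Sne by (intro Min_in) auto
    then obtain b where "b \<in> S" "y $ b = ?M" by (metis imageE)
    moreover have "\<And>i. i \<in> S \<Longrightarrow> ?M \<le> y $ i" by (intro Min_le) auto
    ultimately show ?thesis using that by metis
  qed
  have bpos: "y $ b > 0" using bS Delta_nonneg[OF y, of b] by (auto simp: S_def)
  have b': "\<And>i. y $ i = 0 \<or> y $ b \<le> y $ i" using b by (auto simp: S_def)
  note inv = traj_inv[OF y n2 a bpos b']
  show "\<And>t. (Fmap ^^ t) y \<in> Delta" using inv by blast
  show "\<And>t i. (Fmap ^^ t) y $ i = 0 \<longleftrightarrow> y $ i = 0" using inv by blast
  define c where "c = 1 - y $ b / real CARD('n)"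
  have c: "0 \<le> c" "c < 1"
    using Delta_le1[OF y, of b] n2 bpos by (auto simp: c_def field_simps)
  have g: "(\<lambda>t. c ^ t * (y $ a - y $ b)) \<longlonglongrightarrow> 0"
    by (intro tendsto_mult_left_zero LIMSEQ_power_zero) (use c in auto)
  have bound: "\<bar>(Fmap ^^ t) y $ i - 1 / real k\<bar> \<le> c ^ t * (y $ a - y $ b)" if iS: "i \<in> S" for t i
  proof -
    define P where "P = (Fmap ^^ t) y"
    have P: "P \<in> Delta" "\<And>i. P $ i = 0 \<longleftrightarrow> y $ i = 0" "\<And>i. P $ i \<le> P $ a"
      "\<And>i. P $ i = 0 \<or> P $ b \<le> P $ i"
      "P $ a - P $ b \<le> c ^ t * (y $ a - y $ b)"
      using inv unfolding P_def c_def by auto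
    have sumS: "(\<Sum>j\<in>S. P $ j) = 1"
    proof -
      have "(\<Sum>j\<in>UNIV. P $ j) = (\<Sum>j\<in>S. P $ j)"
        by (rule sum.mono_neutral_right) (use P(2) in \<open>auto simp: S_def\<close>)
      thus ?thesis using P(1) by (simp add: Delta_def)
    qed
    have "(\<Sum>j\<in>S. P $ b) \<le> (\<Sum>j\<in>S. P $ j)"
      by (rule sum_mono) (use P(2,4) in \<open>auto simp: S_def\<close>)
    hence lo: "real k * P $ b \<le> 1" using sumS by (simp add: k_def)
    have "(\<Sum>j\<in>S. P $ j) \<le> (\<Sum>j\<in>S. P $ a)"
      by (rule sum_mono) (use P(3) in auto)
    hence hi: "1 \<le> real k * P $ a" using sumS by (simp add: k_def)
    have "P $ b \<le> 1 / real k" using lo kpos by (simp add: field_simps)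
    moreover have "1 / real k \<le> P $ a" using hi kpos by (simp add: field_simps)
    moreover have "P $ b \<le> P $ i" "P $ i \<le> P $ a" using P(2,3,4) iS by (auto simp: S_def)
    ultimately have "\<bar>P $ i - 1 / real k\<bar> \<le> P $ a - P $ b" by linarith
    thus ?thesis using P(5) unfolding P_def by linarith
  qed
  have "\<forall>t i. y $ i \<noteq> 0 \<longrightarrow>
           \<bar>(Fmap ^^ t) y $ i - 1 / real (card {j. y $ j \<noteq> 0})\<bar> \<le> y $ a - y $ b"
  proof (intro allI impI)
    fix t i assume "y $ i \<noteq> 0"
    hence "\<bar>(Fmap ^^ t) y $ i - 1 / real k\<bar> \<le> c ^ t * (y $ a - y $ b)"
      using bound by (auto simp: S_def)
    also have "\<dots> \<le> 1 * (y $ a - y $ b)"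
      using c a[of b] by (intro mult_right_mono power_le_one) auto
    finally show "\<bar>(Fmap ^^ t) y $ i - 1 / real (card {j. y $ j \<noteq> 0})\<bar> \<le> y $ a - y $ b"
      by (simp add: k_def S_def)
  qed
  thus "\<exists>a b. \<forall>t i. y $ i \<noteq> 0 \<longrightarrow>
           \<bar>(Fmap ^^ t) y $ i - 1 / real (card {j. y $ j \<noteq> 0})\<bar> \<le> y $ a - y $ b" by blast
  show "(\<lambda>t. (Fmap ^^ t) y) \<longlonglongrightarrow> limv y"
  proof (rule vec_tendstoI)
    fix i
    show "(\<lambda>t. (Fmap ^^ t) y $ i) \<longlonglongrightarrow> limv y $ i"
    proof (cases "i \<in> S")
      case True
      have "(\<lambda>t. (Fmap ^^ t) y $ i - 1 / real k) \<longlonglongrightarrow> 0"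
        by (rule Lim_null_comparison[OF _ g]) (use bound True in auto)
      hence "(\<lambda>t. (Fmap ^^ t) y $ i) \<longlonglongrightarrow> 1 / real k" by (rule LIM_zero_cancel)
      thus ?thesis using True by (simp add: limv_def S_def k_def)
    next
      case False
      hence "\<And>t. (Fmap ^^ t) y $ i = 0" using inv by (auto simp: S_def)
      thus ?thesis using False by (simp add: limv_def S_def)
    qed
  qed
qed

lemma card_supp_pos:
  fixes y :: "real ^ 'n"
  assumes y: "y \<in> Delta"
  shows "card {j. y $ j \<noteq> 0} > 0"
proof -
  have "{j. y $ j \<noteq> 0} \<noteq> {}"
  proof
    assume "{j. y $ j \<noteq> 0} = {}"
    hence "\<forall>j. y $ j = 0" by auto
    thus False using y by (simp add: Delta_def)
  qed
  thus ?thesis by (simp add: card_gt_0_iff)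
qed

lemma limv_fixed:
  fixes y :: "real ^ 'n"
  assumes y: "y \<in> Delta" and n2: "CARD('n) \<ge> 2"
  shows "Fmap (limv y) = limv y"
proof -
  define S where "S = {j. y $ j \<noteq> 0}"
  define k where "k = real (card S)"
  have k1: "k \<ge> 1" using card_supp_pos[OF y] by (simp add: k_def S_def)
  have N2: "real CARD('n) \<ge> 2" using n2 by simp
  have L: "Lsq (limv y) = 1 / k"
  proof -
    have "Lsq (limv y) = (\<Sum>i\<in>UNIV. if i \<in> S then (1 / k)^2 else 0)"
      unfolding Lsq_def limv_def by (intro sum.cong) (auto simp: S_def k_def)
    also have "\<dots> = k * (1/k)^2" by (simp add: sum.If_cases k_def)
    also have "\<dots> = 1 / k" using k1 by (simp add: power2_eq_square)
    finally show ?thesis .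
  qed
  have "real CARD('n) - 1 / k > 0"
  proof -
    have "1 / k \<le> 1" using k1 by simp
    thus ?thesis using N2 by linarith
  qed
  thus ?thesis
    by (auto simp: vec_eq_iff Fmap_nth L) (auto simp: limv_def S_def k_def)
qed

lemma limv_Delta:
  fixes y :: "real ^ 'n"
  assumes y: "y \<in> Delta"
  shows "limv y \<in> Delta"
proof -
  define S where "S = {j. y $ j \<noteq> 0}"
  have k: "card S > 0" using card_supp_pos[OF y] by (simp add: S_def)
  have "(\<Sum>i\<in>UNIV. limv y $ i) = (\<Sum>i\<in>UNIV. if i \<in> S then 1 / real (card S) else 0)"
    unfolding limv_def by (intro sum.cong) (auto simp: S_def)
  also have "\<dots> = 1" using k by (simp add: sum.If_cases card_gt_0_iff)
  finally show ?thesis by (auto simp: Delta_def limv_def)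
qed

lemma limv_pos:
  fixes y :: "real ^ 'n"
  assumes "\<And>i. y $ i \<noteq> 0"
  shows "limv y = (\<chi> i. 1 / real CARD('n))"
  using assms by (simp add: limv_def vec_eq_iff)

lemma near_center:
  fixes y :: "real ^ 'n"
  assumes "dist y (\<chi> i. 1 / real CARD('n)) < d"
  shows "\<bar>y $ i - 1 / real CARD('n)\<bar> < d"
proof -
  have "\<bar>(y - (\<chi> i. 1 / real CARD('n))) $ i\<bar> \<le> norm (y - (\<chi> i. 1 / real CARD('n)))"
    by (rule component_le_norm_cart)
  thus ?thesis using assms by (simp add: dist_norm)
qed

lemma center_stable:
  assumes n2: "CARD('n) \<ge> 2"
  shows "loc_asym_stable_on Delta Fmap (\<chi> i. 1 / real CARD('n) :: real ^ 'n)"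
proof -
  let ?N = "real CARD('n)"
  let ?c = "(\<chi> i. 1 / real CARD('n)) :: real ^ 'n"
  have Npos: "?N > 0" by simp
  have allpos: "y $ i \<noteq> 0" if "dist y ?c < 1 / ?N" for y :: "real ^ 'n" and i
    using near_center[OF that, of i] by auto
  have st: "stable_on Delta Fmap ?c"
    unfolding stable_on_def
  proof (intro allI impI)
    fix e :: real assume e: "e > 0"
    define d where "d = min (1 / ?N) (e / (2 * ?N))"
    have d: "d > 0" using e by (simp add: d_def)
    show "\<exists>d>0. \<forall>y\<in>Delta. dist y ?c < d \<longrightarrow> (\<forall>t. dist ((Fmap ^^ t) y) ?c < e)"
    proof (intro exI[of _ d] conjI ballI impI allI d)
      fix y :: "real ^ 'n" and t assume y: "y \<in> Delta" and dy: "dist y ?c < d"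
      have yi: "\<And>i. y $ i \<noteq> 0" using allpos dy by (simp add: d_def)
      have cardS: "card {j. y $ j \<noteq> 0} = CARD('n)" using yi by simp
      obtain a b where ab0: "\<forall>t i. y $ i \<noteq> 0 \<longrightarrow>
           \<bar>(Fmap ^^ t) y $ i - 1 / real (card {j. y $ j \<noteq> 0})\<bar> \<le> y $ a - y $ b"
        using traj_conv(4)[OF y n2] by blast
      have ab: "\<bar>(Fmap ^^ t) y $ i - 1 / real (card {j. y $ j \<noteq> 0})\<bar> \<le> y $ a - y $ b" for i
        using ab0 yi by blast
      have ya: "\<bar>y $ a - 1 / ?N\<bar> < d" "\<bar>y $ b - 1 / ?N\<bar> < d"
        using near_center[OF dy] by auto
      have "dist ((Fmap ^^ t) y) ?c = norm ((Fmap ^^ t) y - ?c)" by (simp add: dist_norm)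
      also have "\<dots> \<le> (\<Sum>i\<in>UNIV. \<bar>((Fmap ^^ t) y - ?c) $ i\<bar>)" by (rule norm_le_l1_cart)
      also have "\<dots> \<le> (\<Sum>i\<in>(UNIV::'n set). y $ a - y $ b)"
        using ab cardS by (intro sum_mono) simp
      also have "\<dots> = ?N * (y $ a - y $ b)" by simp
      also have "\<dots> < ?N * (2 * d)" using ya Npos by (intro mult_strict_left_mono) auto
      also have "\<dots> \<le> ?N * (2 * (e / (2 * ?N)))"
        using Npos by (intro mult_left_mono) (auto simp: d_def)
      also have "\<dots> = e" using Npos by simp
      finally show "dist ((Fmap ^^ t) y) ?c < e" .
    qed
  qed
  have "\<forall>y\<in>Delta. dist y ?c < 1 / ?N \<longrightarrow> (\<lambda>t. (Fmap ^^ t) y) \<longlonglongrightarrow> ?c"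
  proof (intro ballI impI)
    fix y :: "real ^ 'n" assume y: "y \<in> Delta" and dy: "dist y ?c < 1 / ?N"
    have "limv y = ?c" using limv_pos allpos[OF dy] by blast
    thus "(\<lambda>t. (Fmap ^^ t) y) \<longlonglongrightarrow> ?c" using traj_conv(1)[OF y n2] by simp
  qed
  thus ?thesis unfolding loc_asym_stable_on_def using st Npos
    by (intro conjI exI[of _ "1 / ?N"]) auto
qed

lemma limv_unstable:
  fixes p0 :: "real ^ 'n"
  assumes p0: "p0 \<in> Delta" and n2: "CARD('n) \<ge> 2" and j: "p0 $ j = 0"
  shows "unstable_on Delta Fmap (limv p0)"
proof -
  let ?N = "real CARD('n)"
  let ?c = "(\<chi> i. 1 / real CARD('n)) :: real ^ 'n"
  let ?q = "limv p0"
  have q: "?q \<in> Delta" by (rule limv_Delta[OF p0])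
  have qj: "?q $ j = 0" using j by (simp add: limv_def)
  have Npos: "?N > 0" by simp
  have "?q \<noteq> ?c"
  proof
    assume "?q = ?c"
    hence "?q $ j = 1 / ?N" by simp
    thus False using qj Npos by simp
  qed
  hence e: "dist ?c ?q > 0" by simp
  define e where "e = dist ?c ?q"
  show ?thesis unfolding unstable_on_def stable_on_def
  proof
    assume "\<forall>\<epsilon>>0. \<exists>\<delta>>0. \<forall>y\<in>Delta. dist y ?q < \<delta> \<longrightarrow> (\<forall>t. dist ((Fmap ^^ t) y) ?q < \<epsilon>)"
    moreover have "e / 2 > 0" using e by (simp add: e_def)
    ultimately obtain d where d: "d > 0"
      and H: "\<And>y t. y \<in> Delta \<Longrightarrow> dist y ?q < d \<Longrightarrow> dist ((Fmap ^^ t) y) ?q < e / 2"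
      by blast
    have epos: "e > 0" using e by (simp add: e_def)
    define s where "s = min (1/2) (d / (2 * e))"
    have s: "s > 0" "s \<le> 1/2" "s * e < d"
    proof -
      show "s > 0" "s \<le> 1/2" using d epos by (auto simp: s_def)
      have "s * e \<le> d / (2 * e) * e" using epos by (intro mult_right_mono) (auto simp: s_def)
      also have "\<dots> = d / 2" using epos by simp
      finally show "s * e < d" using d by simp
    qed
    define y where "y = ?q + s *\<^sub>R (?c - ?q)"
    have yi: "y $ i = (1 - s) * ?q $ i + s / ?N" for i
      by (simp add: y_def algebra_simps)
    have ypos: "y $ i > 0" for i
    proof -
      have "(1 - s) * ?q $ i \<ge> 0" using s Delta_nonneg[OF q, of i] by simp
      moreover have "s / ?N > 0" using s Npos by simp
      ultimately show ?thesis using yi by simp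
    qed
    have yD: "y \<in> Delta"
    proof -
      have "(\<Sum>i\<in>UNIV. y $ i) = (1 - s) * (\<Sum>i\<in>UNIV. ?q $ i) + (\<Sum>i\<in>(UNIV::'n set). s / ?N)"
        by (simp add: yi sum.distrib sum_distrib_left)
      also have "\<dots> = 1" using q Npos by (simp add: Delta_def)
      finally show ?thesis using ypos less_imp_le by (auto simp: Delta_def)
    qed
    have "dist y ?q = s * e"
      using s by (simp add: y_def dist_norm e_def dist_commute)
    hence dy: "dist y ?q < d" using s by simp
    have "limv y = ?c" using limv_pos ypos by (metis less_irrefl)
    hence conv: "(\<lambda>t. (Fmap ^^ t) y) \<longlonglongrightarrow> ?c" using traj_conv(1)[OF yD n2] by simp
    then obtain t where t: "dist ((Fmap ^^ t) y) ?c < e / 2"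
      using \<open>e / 2 > 0\<close> by (meson LIMSEQ_iff_nz dist_norm order_refl tendsto_iff eventually_sequentially)
    have "dist ((Fmap ^^ t) y) ?q < e / 2" by (rule H[OF yD dy])
    moreover have "e \<le> dist ((Fmap ^^ t) y) ?c + dist ((Fmap ^^ t) y) ?q"
      unfolding e_def by (metis dist_commute dist_triangle)
    ultimately show False using t by simp
  qed
qed

theorem theorem1:
  fixes p0 :: "real ^ 'n"
  assumes n2: "CARD('n) \<ge> 2"
    and p0: "p0 \<in> Delta"
  defines "m \<equiv> card {i. p0 $ i = 0}"
  shows "\<exists>pinf rinf.
     (\<lambda>t. (Fmap ^^ t) p0) \<longlonglongrightarrow> pinf \<and>
     (\<lambda>t. rvec ((Fmap ^^ t) p0)) \<longlonglongrightarrow> rinf \<and>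
     Fmap pinf = pinf \<and>
     (m = 0 \<longrightarrow> pinf = rinf \<and>
        (\<forall>i. pinf $ i = 1 / real CARD('n) \<and> rinf $ i = 1 / real CARD('n))) \<and>
     (1 \<le> m \<and> m < CARD('n) \<longrightarrow> pinf \<noteq> rinf \<and>
        (\<forall>j. p0 $ j = 0 \<longrightarrow> pinf $ j = 0 \<and> rinf $ j = 1 / (real CARD('n) - 1)) \<and>
        (\<forall>i. p0 $ i > 0 \<longrightarrow> pinf $ i = 1 / (real CARD('n) - real m) \<and>
             rinf $ i = (real CARD('n) - real m - 1) / ((real CARD('n) - 1) * (real CARD('n) - real m)))) \<and>
     loc_asym_stable_on Delta Fmap (\<chi> i. 1 / real CARD('n) :: real ^ 'n) \<and>
     (1 \<le> m \<longrightarrow> unstable_on Delta Fmap pinf)"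
proof -
  let ?N = "real CARD('n)"
  define pinf where "pinf = limv p0"
  define rinf where "rinf = rvec pinf"
  define S where "S = {j. p0 $ j \<noteq> 0}"
  have N2: "?N \<ge> 2" using n2 by simp
  have Sc: "S = UNIV - {i. p0 $ i = 0}" by (auto simp: S_def)
  have mle: "m \<le> CARD('n)" unfolding m_def by (rule card_mono) auto
  have cardS: "card S = CARD('n) - m" unfolding Sc m_def by (simp add: card_Diff_subset)
  have kpos: "card S > 0" using card_supp_pos[OF p0] by (simp add: S_def)
  hence mlt: "m < CARD('n)" using cardS by simp
  have rk: "real (card S) = ?N - real m" using cardS mle by (simp add: of_nat_diff)
  have Nm: "?N - real m > 0" using mlt by simp
  have pi: "pinf $ i = (if p0 $ i = 0 then 0 else 1 / (?N - real m))" for i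
    using rk by (simp add: pinf_def limv_def S_def[symmetric])
  have ri: "rinf $ i = (1 - pinf $ i) / (?N - 1)" for i
    by (simp add: rinf_def rvec_def)
  have conv: "(\<lambda>t. (Fmap ^^ t) p0) \<longlonglongrightarrow> pinf"
    unfolding pinf_def by (rule traj_conv(1)[OF p0 n2])
  have rconv: "(\<lambda>t. rvec ((Fmap ^^ t) p0)) \<longlonglongrightarrow> rinf"
  proof (rule vec_tendstoI)
    fix i
    have "(\<lambda>t. (Fmap ^^ t) p0 $ i) \<longlonglongrightarrow> pinf $ i" using conv by (rule tendsto_vec_nth)
    hence "(\<lambda>t. (1 - (Fmap ^^ t) p0 $ i) / (?N - 1)) \<longlonglongrightarrow> (1 - pinf $ i) / (?N - 1)"
      using conv N2 by (intro tendsto_intros) auto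
    thus "(\<lambda>t. rvec ((Fmap ^^ t) p0) $ i) \<longlonglongrightarrow> rinf $ i"
      by (simp add: rvec_def ri)
  qed
  have fixp: "Fmap pinf = pinf" unfolding pinf_def by (rule limv_fixed[OF p0 n2])
  have c0: "m = 0 \<longrightarrow> pinf = rinf \<and>
        (\<forall>i. pinf $ i = 1 / real CARD('n) \<and> rinf $ i = 1 / real CARD('n))"
  proof
    assume m0: "m = 0"
    have nz: "p0 $ i \<noteq> 0" for i
    proof
      assume "p0 $ i = 0"
      hence "i \<in> {i. p0 $ i = 0}" by simp
      hence "m \<noteq> 0" unfolding m_def by (metis card_0_eq empty_iff finite)
      thus False using m0 by simp
    qed
    have P: "pinf $ i = 1 / ?N" for i using pi[of i] nz[of i] m0 by simp
    have R: "rinf $ i = 1 / ?N" for i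
    proof -
      have "?N - 1 > 0" using N2 by simp
      thus ?thesis using N2 by (simp add: ri P field_simps)
    qed
    show "pinf = rinf \<and> (\<forall>i. pinf $ i = 1 / real CARD('n) \<and> rinf $ i = 1 / real CARD('n))"
      using P R by (simp add: vec_eq_iff)
  qed
  have c1: "1 \<le> m \<and> m < CARD('n) \<longrightarrow> pinf \<noteq> rinf \<and>
        (\<forall>j. p0 $ j = 0 \<longrightarrow> pinf $ j = 0 \<and> rinf $ j = 1 / (real CARD('n) - 1)) \<and>
        (\<forall>i. p0 $ i > 0 \<longrightarrow> pinf $ i = 1 / (real CARD('n) - real m) \<and>
             rinf $ i = (real CARD('n) - real m - 1) / ((real CARD('n) - 1) * (real CARD('n) - real m)))"
  proof
    assume m1: "1 \<le> m \<and> m < CARD('n)"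
    have N1: "?N - 1 > 0" using N2 by simp
    have Z: "\<forall>j. p0 $ j = 0 \<longrightarrow> pinf $ j = 0 \<and> rinf $ j = 1 / (real CARD('n) - 1)"
      using pi ri by simp
    obtain j where j: "p0 $ j = 0"
    proof -
      have "{i. p0 $ i = 0} \<noteq> {}" using m1 unfolding m_def by (metis card.empty not_one_le_zero)
      thus ?thesis using that by blast
    qed
    have "pinf $ j \<noteq> rinf $ j" using Z j N1 by simp
    hence ne: "pinf \<noteq> rinf" by metis
    have P: "\<forall>i. p0 $ i > 0 \<longrightarrow> pinf $ i = 1 / (real CARD('n) - real m) \<and>
             rinf $ i = (real CARD('n) - real m - 1) / ((real CARD('n) - 1) * (real CARD('n) - real m))"
    proof (intro allI impI)
      fix i assume "p0 $ i > 0"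
      hence pv: "pinf $ i = 1 / (?N - real m)" using pi by simp
      moreover have "rinf $ i = (?N - real m - 1) / ((?N - 1) * (?N - real m))"
        using Nm N1 by (simp add: ri pv field_simps)
      ultimately show "pinf $ i = 1 / (real CARD('n) - real m) \<and>
             rinf $ i = (real CARD('n) - real m - 1) / ((real CARD('n) - 1) * (real CARD('n) - real m))"
        by simp
    qed
    show "pinf \<noteq> rinf \<and>
        (\<forall>j. p0 $ j = 0 \<longrightarrow> pinf $ j = 0 \<and> rinf $ j = 1 / (real CARD('n) - 1)) \<and>
        (\<forall>i. p0 $ i > 0 \<longrightarrow> pinf $ i = 1 / (real CARD('n) - real m) \<and>
             rinf $ i = (real CARD('n) - real m - 1) / ((real CARD('n) - 1) * (real CARD('n) - real m)))"
      using ne Z P by blast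
  qed
  have us: "1 \<le> m \<longrightarrow> unstable_on Delta Fmap pinf"
  proof
    assume "1 \<le> m"
    then obtain j where j: "p0 $ j = 0"
      unfolding m_def by (metis (mono_tags, lifting) Collect_empty_eq card.empty not_one_le_zero)
    show "unstable_on Delta Fmap pinf" unfolding pinf_def by (rule limv_unstable[OF p0 n2 j])
  qed
  show ?thesis
    using conv rconv fixp c0 c1 us center_stable[OF n2] by blast
qed

end
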